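(* In the model and for the Algorithm $A$ described in the context, fix $h,\ell$ and a realization of the sample information $\psi$, and let $n_1=h-s_1$, $n_2=\ell-s_2$. Let $I_{\mathrm{order}}$ be the arrival sequence in which the $n_2$ type 2 agents arrive first, followed by the $n_1$ type 1 agents, and let $I$ be any arrival sequence containing $n_2$ type 2 agents and $n_1$ type 1 agents. Then $$\frac{\mathbb E[\mathrm{REW}_A(I_{\mathrm{order}},\psi)]}{\mathrm{OPT}(I_{\mathrm{order}})}\le\frac{\mathbb E[\mathrm{REW}_A(I,\psi)]}{\mathrm{OPT}(I)}.$$
   Context: Model: a decision-maker has $m$ units of a divisible resource; an accepted type-$i$ agent ($i\in\{1,2\}$) yields a reward in $\{0,1\}$ with mean $r_i\in(0,1)$, $r_1>r_2$, unknown. An adversary chooses integers $h,\ell\ge0$; each agent is independently sampled with known probability $p\in(0,1)$; $s_1\sim\mathrm{Bin}(h,p)$, $s_2\sim\mathrm{Bin}(\ell,p)$; sampled agents reveal realized rewards $\rho_{i,j}\sim\mathrm{Ber}(r_i)$; $\psi$ is the sample information. Remaining agents arrive online in order $I$ and are irrevocably accepted (possibly fractionally) or rejected, total allocation at most $m$. $\mathrm{OPT}(I)=r_1\min\{n_1,m\}+r_2\min\{n_2,(m-n_1)^+\}$; $\mathrm{REW}_A(I,\psi)$ is the cumulative expected reward of $A$; $\mathbb E$ is over the algorithm's randomness. Protection level policy for type $i$ with level $x$: accept type $i$ agents while resource remains; accept type $-i$ agents only while fewer than $m-x$ type $-i$ agents have been accepted and resource remains. Algorithm $A$: $\hat r_i=\frac1{s_i}\sum_j\rho_{i,j}$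 if $s_i>0$, else $\hat r_i\sim\mathrm{Uniform}(0,1)$; if $\hat r_1>\hat r_2$ use the protection level policy for type 1 with level $\min\{m,s_1\frac{1-p}{p}\}$, otherwise for type 2 with level $\min\{m,s_2\frac{1-p}{p}\}$. *)

theory Defs
  imports "HOL-Probability.Probability"
begin

text \<open>Agent types are encoded as natural numbers 1 and 2; an arrival sequence is a
list of types. The mean reward of a type-t agent is rw r1 r2 t.\<close>

definition rw :: "real \<Rightarrow> real \<Rightarrow> nat \<Rightarrow> real" where
  "rw r1 r2 t = (if t = 1 then r1 else r2)"

text \<open>One step of the protection level policy for type i with level x (resource m).
State: (remaining resource, amount allocated to type -i agents, cumulative expected reward).\<close>

definition prot_step ::
  "real \<Rightarrow> real \<Rightarrow> real \<Rightarrow> nat \<Rightarrow> real \<Rightarrow> real \<times> real \<times> real \<Rightarrow> nat \<Rightarrow> real \<times> real \<times> real" where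
  "prot_step r1 r2 m i x = (\<lambda>(R, a, tot) t.
     if t = i then
       (let y = min 1 R in (R - y, a, tot + rw r1 r2 t * y))
     else
       (let y = max 0 (min 1 (min R (m - x - a))) in (R - y, a + y, tot + rw r1 r2 t * y)))"

definition prot_reward ::
  "real \<Rightarrow> real \<Rightarrow> real \<Rightarrow> nat \<Rightarrow> real \<Rightarrow> nat list \<Rightarrow> real" where
  "prot_reward r1 r2 m i x I = snd (snd (foldl (prot_step r1 r2 m i x) (m, 0, 0) I))"

text \<open>Estimate of r_i: empirical mean of the sampled rewards, or the uniform draw u if no
sample of that type was taken.\<close>

definition hat_r :: "bool list \<Rightarrow> real \<Rightarrow> real" where
  "hat_r rho u = (if rho = [] then u
                  else (\<Sum>b\<leftarrow>rho. if b then 1 else 0) / real (length rho))"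

text \<open>Reward of algorithm A for given sample information (rho1, rho2) and a realization
omega = (u1, u2) of its internal uniform random draws.\<close>

definition alg_reward ::
  "real \<Rightarrow> real \<Rightarrow> real \<Rightarrow> real \<Rightarrow> bool list \<Rightarrow> bool list \<Rightarrow> nat list \<Rightarrow> real \<times> real \<Rightarrow> real" where
  "alg_reward r1 r2 m p rho1 rho2 I \<omega> =
     (if hat_r rho1 (fst \<omega>) > hat_r rho2 (snd \<omega>)
      then prot_reward r1 r2 m 1 (min m (real (length rho1) * (1 - p) / p)) I
      else prot_reward r1 r2 m 2 (min m (real (length rho2) * (1 - p) / p)) I)"

definition unif01 :: "real measure" where
  "unif01 = uniform_measure lborel {0..1}"

definition exp_alg_reward ::
  "real \<Rightarrow> real \<Rightarrow> real \<Rightarrow> real \<Rightarrow> bool list \<Rightarrow> bool list \<Rightarrow> nat list \<Rightarrow> real" where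
  "exp_alg_reward r1 r2 m p rho1 rho2 I =
     integral\<^sup>L (unif01 \<Otimes>\<^sub>M unif01) (alg_reward r1 r2 m p rho1 rho2 I)"

definition OPT :: "real \<Rightarrow> real \<Rightarrow> real \<Rightarrow> nat list \<Rightarrow> real" where
  "OPT r1 r2 m I = (let n1 = real (count (mset I) 1); n2 = real (count (mset I) 2) in
     r1 * min n1 m + r2 * min n2 (max 0 (m - n1)))"

end

theory Submission
  imports Defs
begin

definition pinv :: "real \<Rightarrow> real \<Rightarrow> real \<Rightarrow> real \<Rightarrow> nat \<Rightarrow> nat \<Rightarrow> real \<times> real \<times> real \<Rightarrow> bool" where
 "pinv ri ro m x ci co = (\<lambda>(R, a, tot). 0 \<le> R \<and> 0 \<le> a \<and> a \<le> m - x \<and> a \<le> co \<and> m - R - a \<le> ci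
    \<and> 0 \<le> m - R - a \<and> tot = ri * (m - R - a) + ro * a
    \<and> (m - R - a = ci \<or> R = 0) \<and> (a = co \<or> a = m - x \<or> R = 0))"

lemma inv_step:
  assumes "pinv (rw r1 r2 i) ro m x ci co s" "t \<noteq> i \<Longrightarrow> rw r1 r2 t = ro"
  shows "pinv (rw r1 r2 i) ro m x (if t = i then Suc ci else ci) (if t = i then co else Suc co)
           (prot_step r1 r2 m i x s t)"
proof -
  obtain R a tot where s: "s = (R, a, tot)" by (cases s) auto
  show ?thesis
  proof (cases "t = i")
    case True
    then show ?thesis using assms(1) unfolding s pinv_def prot_step_def Let_def
      by (auto simp: min_def algebra_simps)
  next
    case False
    then have ro: "rw r1 r2 t = ro" using assms(2) by auto
    have h: "0 \<le> R" "a \<le> m - x" using assms(1) unfolding s pinv_def by auto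
    define y where "y = min 1 (min R (m - x - a))"
    have y: "max 0 (min 1 (min R (m - x - a))) = y" using h unfolding y_def by auto
    have "y = 1 \<or> y = R \<or> y = m - x - a" "y \<le> 1" "y \<le> R" "y \<le> m - x - a" "0 \<le> y"
      using h unfolding y_def by (auto simp: min_def)
    then show ?thesis using assms(1) False unfolding s pinv_def prot_step_def Let_def y ro
      by (auto simp: ro algebra_simps)
  qed
qed

lemma inv_foldl:
  assumes "pinv (rw r1 r2 i) ro m x ci co s" "\<forall>t\<in>set xs. t \<noteq> i \<longrightarrow> rw r1 r2 t = ro"
  shows "pinv (rw r1 r2 i) ro m x (ci + count (mset xs) i) (co + length (filter (\<lambda>t. t \<noteq> i) xs))
           (foldl (prot_step r1 r2 m i x) s xs)"
  using assms
proof (induction xs arbitrary: s ci co)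
  case Nil
  then show ?case by simp
next
  case (Cons t xs)
  have "pinv (rw r1 r2 i) ro m x (if t = i then Suc ci else ci) (if t = i then co else Suc co)
           (prot_step r1 r2 m i x s t)" using inv_step Cons.prems by auto
  from Cons.IH[OF this] Cons.prems show ?case by (auto split: if_splits)
qed

lemma inv_init: "x \<le> m \<Longrightarrow> 0 \<le> m \<Longrightarrow> pinv ri ro m x 0 0 (m, 0, 0)"
  unfolding pinv_def by auto

lemma fold_i_a:
  "fst (snd (foldl (prot_step r1 r2 m i x) s (replicate k i))) = fst (snd s)"
  by (induction k arbitrary: s) (auto simp: prot_step_def Let_def split: prod.splits)

lemma fold_o_b:
  assumes "j \<noteq> i"
  shows "fst (foldl (prot_step r1 r2 m i x) s (replicate k j)) + fst (snd (foldl (prot_step r1 r2 m i x) s (replicate k j)))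
     = fst s + fst (snd s)"
  using assms
  by (induction k arbitrary: s) (auto simp: prot_step_def Let_def split: prod.splits)


lemma arith1:
  fixes r1 r2 m x :: real and n1 n2 :: nat
  assumes "r2 < r1" "0 < r2" "x \<le> m" "0 \<le> x"
    and g: "pinv r1 r2 m x n1 n2 (R, a, tot)"
    and s0: "pinv r1 r2 m x 0 n2 (R0, ao, t0)"
    and o: "pinv r1 r2 m x n1 n2 (Ro, ao, toto)"
  shows "toto \<le> tot"
proof -
  from s0 have s0': "ao = n2 \<or> ao = m - x \<or> R0 = 0" "ao \<le> n2" "ao \<le> m - x" "m - R0 - ao \<le> 0" "0 \<le> m - R0 - ao" "0 \<le> R0"
    unfolding pinv_def by auto
  have ao: "ao = n2 \<or> ao = m - x" "ao \<le> n2" "ao \<le> m - x" using s0' assms(4) by linarith+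
  from g have gg: "0 \<le> R" "a \<le> m - x" "a \<le> n2" "m - R - a \<le> n1" "0 \<le> m - R - a"
    "tot = r1 * (m - R - a) + r2 * a" "m - R - a = n1 \<or> R = 0" "a = n2 \<or> a = m - x \<or> R = 0"
    unfolding pinv_def by auto
  from o have oo: "0 \<le> Ro" "m - Ro - ao \<le> n1" "0 \<le> m - Ro - ao"
    "toto = r1 * (m - Ro - ao) + r2 * ao" "m - Ro - ao = n1 \<or> Ro = 0"
    unfolding pinv_def by auto
  show ?thesis
  proof (cases "a = ao")
    case True
    have "m - R - a = m - Ro - ao" using gg oo True by linarith
    then show ?thesis using gg oo True by simp
  next
    case False
    have "a < ao" using False ao gg by linarith
    then have R: "R = 0" using ao gg by linarith
    have "r1 * (m - Ro - ao) \<le> r1 * (m - ao)" using oo assms(1,2) by (intro mult_left_mono) auto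
    moreover have "(r1 - r2) * a \<le> (r1 - r2) * ao" using \<open>a < ao\<close> assms(1) by (intro mult_left_mono) auto
    ultimately show ?thesis using gg oo R by (simp add: algebra_simps)
  qed
qed

lemma arith2:
  fixes r1 r2 m x :: real and n1 n2 :: nat
  assumes "r2 < r1" "0 < r2" "x \<le> m" "0 \<le> x"
    and g: "pinv r2 r1 m x n2 n1 (R, a, tot)"
    and s0: "pinv r2 r1 m x n2 0 (R0, a0, t0)"
    and o: "pinv r2 r1 m x n2 n1 (Ro, ao, toto)"
    and sum: "Ro + ao = R0 + a0"
  shows "toto \<le> tot"
proof -
  from s0 have a0: "a0 = 0" "m - R0 \<le> n2" "m - R0 = n2 \<or> R0 = 0" "0 \<le> R0"
    unfolding pinv_def by auto
  from g have gg: "0 \<le> R" "a \<le> m - x" "a \<le> n1" "m - R - a \<le> n2" "0 \<le> m - R - a"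
    "tot = r2 * (m - R - a) + r1 * a" "m - R - a = n2 \<or> R = 0" "a = n1 \<or> a = m - x \<or> R = 0" "0 \<le> a"
    unfolding pinv_def by auto
  from o have oo: "0 \<le> Ro" "ao \<le> n1" "ao \<le> m - x" "0 \<le> ao"
    "toto = r2 * (m - Ro - ao) + r1 * ao"
    unfolding pinv_def by auto
  have "ao \<le> a"
  proof (rule ccontr)
    assume "\<not> ao \<le> a"
    then have "R = 0" using gg oo by linarith
    then show False using a0(3) a0(1,2,4) gg oo sum \<open>\<not> ao \<le> a\<close> by (elim disjE) linarith+
  qed
  show ?thesis
  proof (cases "m - R - a = n2")
    case True
    have "r2 * (m - Ro - ao) \<le> r2 * (m - R - a)" using True a0 sum assms(2) by (intro mult_left_mono) auto
    moreover have "r1 * ao \<le> r1 * a" using \<open>ao \<le> a\<close> assms by (intro mult_left_mono) auto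
    ultimately show ?thesis using gg oo by linarith
  next
    case False
    then have R: "R = 0" using gg by auto
    have "r2 * (m - Ro - ao) \<le> r2 * (m - ao)" using oo assms(2) by (intro mult_left_mono) auto
    moreover have "(r1 - r2) * ao \<le> (r1 - r2) * a" using \<open>ao \<le> a\<close> assms(1) by (intro mult_left_mono) auto
    ultimately show ?thesis using gg oo R by (simp add: algebra_simps)
  qed
qed


lemma filter_len:
  assumes "set xs \<subseteq> {i, j}" "i \<noteq> j"
  shows "length (filter (\<lambda>t. t \<noteq> i) xs) = count (mset xs) j"
  using assms by (induction xs) auto

lemma pw1:
  fixes r1 r2 m x :: real and n1 n2 :: nat
  assumes "r2 < r1" "0 < r2" "x \<le> m" "0 \<le> x" "0 \<le> m"
    and I: "set I \<subseteq> {1, 2}" "count (mset I) 1 = n1" "count (mset I) 2 = n2"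
  shows "prot_reward r1 r2 m 1 x (replicate n2 2 @ replicate n1 1) \<le> prot_reward r1 r2 m 1 x I"
proof -
  let ?f = "foldl (prot_step r1 r2 m 1 x)"
  have rwI: "\<forall>t\<in>set xs. t \<noteq> 1 \<longrightarrow> rw r1 r2 t = r2" for xs :: "nat list" by (simp add: rw_def)
  have r11: "rw r1 r2 1 = r1" by (simp add: rw_def)
  have init: "pinv (rw r1 r2 1) r2 m x 0 0 (m, 0, 0)" using assms by (intro inv_init)
  obtain R a tot where gdef: "?f (m, 0, 0) I = (R, a, tot)" by (cases "?f (m, 0, 0) I") auto
  have "pinv (rw r1 r2 1) r2 m x (0 + count (mset I) 1) (0 + length (filter (\<lambda>t. t \<noteq> 1) I)) (?f (m, 0, 0) I)"
    by (rule inv_foldl[OF init rwI])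
  then have g: "pinv r1 r2 m x n1 n2 (R, a, tot)" using gdef I filter_len[OF I(1)] r11 by simp
  obtain R0 a0 t0 where s0def: "?f (m, 0, 0) (replicate n2 2) = (R0, a0, t0)"
    by (cases "?f (m, 0, 0) (replicate n2 2)") auto
  have "pinv (rw r1 r2 1) r2 m x (0 + count (mset (replicate n2 (2::nat))) 1)
     (0 + length (filter (\<lambda>t. t \<noteq> 1) (replicate n2 (2::nat)))) (?f (m, 0, 0) (replicate n2 2))"
    by (rule inv_foldl[OF init rwI])
  then have s0: "pinv r1 r2 m x 0 n2 (R0, a0, t0)" using s0def r11 by simp
  obtain Ro ao toto where odef: "?f (R0, a0, t0) (replicate n1 1) = (Ro, ao, toto)"
    by (cases "?f (R0, a0, t0) (replicate n1 1)") auto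
  have "pinv (rw r1 r2 1) r2 m x (0 + count (mset (replicate n1 (1::nat))) 1)
     (n2 + length (filter (\<lambda>t. t \<noteq> 1) (replicate n1 (1::nat)))) (?f (R0, a0, t0) (replicate n1 1))"
    by (rule inv_foldl[OF _ rwI]) (use s0 r11 in simp)
  then have o: "pinv r1 r2 m x n1 n2 (Ro, ao, toto)" using odef r11 by simp
  have "ao = a0" using fold_i_a[of r1 r2 m 1 x "(R0, a0, t0)" n1] odef by simp
  then have "toto \<le> tot" using arith1[OF assms(1-4) g _ o] s0 by simp
  then show ?thesis unfolding prot_reward_def using gdef odef s0def by simp
qed

lemma pw2:
  fixes r1 r2 m x :: real and n1 n2 :: nat
  assumes "r2 < r1" "0 < r2" "x \<le> m" "0 \<le> x" "0 \<le> m"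
    and I: "set I \<subseteq> {1, 2}" "count (mset I) 1 = n1" "count (mset I) 2 = n2"
  shows "prot_reward r1 r2 m 2 x (replicate n2 2 @ replicate n1 1) \<le> prot_reward r1 r2 m 2 x I"
proof -
  let ?f = "foldl (prot_step r1 r2 m 2 x)"
  have rwI: "\<forall>t\<in>set xs. t \<noteq> 2 \<longrightarrow> rw r1 r2 t = r1" if "set xs \<subseteq> {1,2}" for xs :: "nat list"
    using that by (auto simp add: rw_def)
  have r11: "rw r1 r2 2 = r2" by (simp add: rw_def)
  have init: "pinv (rw r1 r2 2) r1 m x 0 0 (m, 0, 0)" using assms by (intro inv_init)
  obtain R a tot where gdef: "?f (m, 0, 0) I = (R, a, tot)" by (cases "?f (m, 0, 0) I") auto
  have "pinv (rw r1 r2 2) r1 m x (0 + count (mset I) 2) (0 + length (filter (\<lambda>t. t \<noteq> 2) I)) (?f (m, 0, 0) I)"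
    by (rule inv_foldl[OF init rwI[OF I(1)]])
  moreover have "length (filter (\<lambda>t. t \<noteq> 2) I) = n1" using filter_len[of I 2 1] I by auto
  ultimately have g: "pinv r2 r1 m x n2 n1 (R, a, tot)" using gdef I r11 by simp
  obtain R0 a0 t0 where s0def: "?f (m, 0, 0) (replicate n2 2) = (R0, a0, t0)"
    by (cases "?f (m, 0, 0) (replicate n2 2)") auto
  have "pinv (rw r1 r2 2) r1 m x (0 + count (mset (replicate n2 (2::nat))) 2)
     (0 + length (filter (\<lambda>t. t \<noteq> 2) (replicate n2 (2::nat)))) (?f (m, 0, 0) (replicate n2 2))"
    by (rule inv_foldl[OF init rwI]) auto
  then have s0: "pinv r2 r1 m x n2 0 (R0, a0, t0)" using s0def r11 by simp
  obtain Ro ao toto where odef: "?f (R0, a0, t0) (replicate n1 1) = (Ro, ao, toto)"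
    by (cases "?f (R0, a0, t0) (replicate n1 1)") auto
  have "pinv (rw r1 r2 2) r1 m x (n2 + count (mset (replicate n1 (1::nat))) 2)
     (0 + length (filter (\<lambda>t. t \<noteq> 2) (replicate n1 (1::nat)))) (?f (R0, a0, t0) (replicate n1 1))"
    by (rule inv_foldl[OF _ rwI]) (use s0 r11 in auto)
  then have o: "pinv r2 r1 m x n2 n1 (Ro, ao, toto)" using odef r11 by simp
  have "Ro + ao = R0 + a0" using fold_o_b[of 1 2 r1 r2 m x "(R0, a0, t0)" n1] odef by simp
  then have "toto \<le> tot" using arith2[OF assms(1-4) g s0 o] by simp
  then show ?thesis unfolding prot_reward_def using gdef odef s0def by simp
qed


lemma prob_unif: "prob_space unif01"
  unfolding unif01_def by (rule prob_space_uniform_measure) auto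

lemma integ: "integrable (unif01 \<Otimes>\<^sub>M unif01) (alg_reward r1 r2 m p rho1 rho2 J)"
proof -
  interpret P: pair_prob_space unif01 unif01
    by (simp add: pair_prob_space_def pair_sigma_finite_def prob_unif prob_space_imp_sigma_finite)
  let ?c1 = "prot_reward r1 r2 m 1 (min m (real (length rho1) * (1 - p) / p)) J"
  let ?c2 = "prot_reward r1 r2 m 2 (min m (real (length rho2) * (1 - p) / p)) J"
  have meas: "alg_reward r1 r2 m p rho1 rho2 J \<in> borel_measurable (unif01 \<Otimes>\<^sub>M unif01)"
    unfolding alg_reward_def[abs_def] hat_r_def unif01_def by measurable
  show ?thesis
    by (rule P.P.integrable_const_bound[where B = "max \<bar>?c1\<bar> \<bar>?c2\<bar>"]) (auto simp: alg_reward_def meas)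
qed

theorem lemma1:
  fixes m p r1 r2 :: real and h l :: nat and rho1 rho2 :: "bool list" and I :: "nat list"
  assumes "0 < m" and "0 < p" and "p < 1"
    and "0 < r2" and "r2 < r1" and "r1 < 1"
    and "length rho1 \<le> h" and "length rho2 \<le> l"
    and "set I \<subseteq> {1, 2}"
    and "count (mset I) 1 = h - length rho1"
    and "count (mset I) 2 = l - length rho2"
  shows "exp_alg_reward r1 r2 m p rho1 rho2
           (replicate (l - length rho2) 2 @ replicate (h - length rho1) 1)
         / OPT r1 r2 m (replicate (l - length rho2) 2 @ replicate (h - length rho1) 1)
       \<le> exp_alg_reward r1 r2 m p rho1 rho2 I / OPT r1 r2 m I"
proof -
  let ?O = "replicate (l - length rho2) 2 @ replicate (h - length rho1) (1::nat)"
  have x: "0 \<le> min m (real (length rho) * (1 - p) / p)" "min m (real (length rho) * (1 - p) / p) \<le> m"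
    for rho :: "bool list" using assms by auto
  have pw: "alg_reward r1 r2 m p rho1 rho2 ?O \<omega> \<le> alg_reward r1 r2 m p rho1 rho2 I \<omega>" for \<omega>
    unfolding alg_reward_def
    using pw1[OF assms(5,4) x(2,1) _ assms(9-11)] pw2[OF assms(5,4) x(2,1) _ assms(9-11)] assms(1)
    by auto
  have E: "exp_alg_reward r1 r2 m p rho1 rho2 ?O \<le> exp_alg_reward r1 r2 m p rho1 rho2 I"
    unfolding exp_alg_reward_def by (rule integral_mono[OF integ integ pw])
  have OPTeq: "OPT r1 r2 m ?O = OPT r1 r2 m I"
    unfolding OPT_def using assms(10,11) by simp
  have "0 \<le> OPT r1 r2 m I"
    unfolding OPT_def Let_def using assms by (intro add_nonneg_nonneg mult_nonneg_nonneg) auto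
  then show ?thesis using E OPTeq by (simp add: divide_right_mono)
qed

end
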